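(* Let $\nu\in\mathbb{Z}_{\ge0}\cup\{\infty\}$ be a changepoint, $T\ge0$ a random sequence length, and $\tau\ge0$ the detection time of an online changepoint detector, with $\tau$ independent of $T$ conditionally on $\nu=\infty$, and $\mu_\infty:=\mathbb{E}[\tau\mid\nu=\infty]<\infty$. Let $S^{\mathrm{ARL}}(t):=P(\tau>t\mid\nu=\infty)$, let $T^*_{\max}:=\inf\{t\mid P(T\le t)=1\}$ (assumed finite), and set $$\mu^{(\mathrm{KM})}_T:=\int_0^{T^*_{\max}}S^{\mathrm{ARL}}(t)\,dt,\qquad \mu^{(\mathrm{LB})}_T:=\mathbb{E}[\tau\mid\nu=\infty,\ \tau\le T],$$ $\mathcal{B}_{\mathrm{TR}}(\hat\mu^{(\mathrm{KM})}_T):=\mu^{(\mathrm{KM})}_T-\mu_\infty$ and $\mathcal{B}_{\mathrm{TR}}(\hat\mu^{(\mathrm{LB})}_T):=\mu^{(\mathrm{LB})}_T-\mu_\infty$. Then $$\mathcal{B}_{\mathrm{TR}}(\hat\mu^{(\mathrm{LB})}_T)\le\mathcal{B}_{\mathrm{TR}}(\hat\mu^{(\mathrm{KM})}_T)\le0.$$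
   Context: Setting: a sequence $X^{(0)},X^{(1)},\dots$ has frames drawn from a pre-change density before the changepoint $\nu$ and a post-change density from $\nu$ on ($\nu=\infty$ means no change); $\nu$ and the length $T$ are independent of the observations. $\mu_\infty$ is the average run length (ARL). $\mu^{(\mathrm{KM})}_T$ is the population version of the KM-ARL estimator with upper integration limit $a=T^*_{\max}$, and $\mu^{(\mathrm{LB})}_T$ the population version of the conventional estimator averaging detection times only over sequences where detection occurs within the sequence length. *)

theory Defs
  imports "HOL-Probability.Probability"
begin

text \<open>All quantities are taken under the conditional law given nu = infinity;
  M denotes that conditional probability space.\<close>

definition S_ARL :: "'a measure \<Rightarrow> ('a \<Rightarrow> real) \<Rightarrow> real \<Rightarrow> real" where
  "S_ARL M tau t = measure M {x \<in> space M. tau x > t}"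

definition T_max :: "'a measure \<Rightarrow> ('a \<Rightarrow> real) \<Rightarrow> real" where
  "T_max M T = Inf {t. measure M {x \<in> space M. T x \<le> t} = 1}"

definition mu_inf :: "'a measure \<Rightarrow> ('a \<Rightarrow> real) \<Rightarrow> real" where
  "mu_inf M tau = (\<integral>x. tau x \<partial>M)"

definition mu_KM :: "'a measure \<Rightarrow> ('a \<Rightarrow> real) \<Rightarrow> ('a \<Rightarrow> real) \<Rightarrow> real" where
  "mu_KM M tau T = (\<integral>t\<in>{0..T_max M T}. S_ARL M tau t \<partial>lborel)"

definition mu_LB :: "'a measure \<Rightarrow> ('a \<Rightarrow> real) \<Rightarrow> ('a \<Rightarrow> real) \<Rightarrow> real" where
  "mu_LB M tau T =
     (\<integral>x. tau x * indicator {y \<in> space M. tau y \<le> T y} x \<partial>M)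
       / measure M {x \<in> space M. tau x \<le> T x}"

definition bias_KM where "bias_KM M tau T = mu_KM M tau T - mu_inf M tau"
definition bias_LB where "bias_LB M tau T = mu_LB M tau T - mu_inf M tau"

end

theory Submission
  imports Defs
begin

lemma layer_cake_min:
  fixes tau :: "'a \<Rightarrow> real"
  assumes P: "prob_space M" and tm[measurable]: "tau \<in> borel_measurable M"
    and nn: "\<forall>x\<in>space M. tau x \<ge> 0" and a: "a \<ge> 0"
  shows "(\<integral>\<^sup>+t. ennreal (indicator {0..a} t * S_ARL M tau t) \<partial>lborel)
       = (\<integral>\<^sup>+x. ennreal (min (tau x) a) \<partial>M)"
proof -
  interpret prob_space M by fact
  interpret pair_sigma_finite M lborel
    by (simp add: pair_sigma_finite.intro prob_space_imp_sigma_finite sigma_finite_lborel P)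
  define f where "f x t = ennreal (if 0 \<le> t \<and> t \<le> a \<and> t < tau x then 1 else 0)" for x t
  have fm: "case_prod f \<in> borel_measurable (M \<Otimes>\<^sub>M lborel)"
    unfolding f_def by measurable
  have 1: "(\<integral>\<^sup>+x. f x t \<partial>M) = ennreal (indicator {0..a} t * S_ARL M tau t)" for t
  proof -
    have "(\<integral>\<^sup>+x. f x t \<partial>M) = (\<integral>\<^sup>+x. indicator {0..a} t * indicator {x\<in>space M. t < tau x} x \<partial>M)"
      by (intro nn_integral_cong) (auto simp: f_def indicator_def)
    also have "\<dots> = indicator {0..a} t * emeasure M {x\<in>space M. t < tau x}"
      by (subst nn_integral_cmult_indicator) auto
    also have "\<dots> = ennreal (indicator {0..a} t * S_ARL M tau t)"
      by (simp add: S_ARL_def emeasure_eq_measure indicator_def)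
    finally show ?thesis .
  qed
  have 2: "(\<integral>\<^sup>+t. f x t \<partial>lborel) = ennreal (min (tau x) a)" if x: "x \<in> space M" for x
  proof (cases "tau x \<le> a")
    case True
    have "(\<integral>\<^sup>+t. f x t \<partial>lborel) = (\<integral>\<^sup>+t. indicator {0..<tau x} t \<partial>lborel)"
      using True by (intro nn_integral_cong) (auto simp: f_def indicator_def)
    then show ?thesis using True nn x by simp
  next
    case False
    have "(\<integral>\<^sup>+t. f x t \<partial>lborel) = (\<integral>\<^sup>+t. indicator {0..a} t \<partial>lborel)"
      using False by (intro nn_integral_cong) (auto simp: f_def indicator_def)
    then show ?thesis using False a by simp
  qed
  have "(\<integral>\<^sup>+t. ennreal (indicator {0..a} t * S_ARL M tau t) \<partial>lborel)
      = (\<integral>\<^sup>+t. (\<integral>\<^sup>+x. f x t \<partial>M) \<partial>lborel)" using 1 by simp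
  also have "\<dots> = (\<integral>\<^sup>+x. (\<integral>\<^sup>+t. f x t \<partial>lborel) \<partial>M)"
    by (rule Fubini'[OF fm])
  also have "\<dots> = (\<integral>\<^sup>+x. ennreal (min (tau x) a) \<partial>M)"
    using 2 by (intro nn_integral_cong) auto
  finally show ?thesis .
qed


lemma T_max_props:
  fixes T :: "'a \<Rightarrow> real"
  assumes P: "prob_space M" and Tm[measurable]: "T \<in> borel_measurable M"
    and nn: "\<forall>x\<in>space M. T x \<ge> 0"
    and ex: "\<exists>t. measure M {x \<in> space M. T x \<le> t} = 1"
  shows "T_max M T \<ge> 0" "AE x in M. T x \<le> T_max M T"
proof -
  interpret prob_space M by fact
  define S where "S = {t. measure M {x \<in> space M. T x \<le> t} = 1}"
  have ne: "S \<noteq> {}" using ex by (auto simp: S_def)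
  have S0: "t \<ge> 0" if "t \<in> S" for t
  proof (rule ccontr)
    assume "\<not> t \<ge> 0"
    then have "{x \<in> space M. T x \<le> t} = {}" using nn by force
    then have "prob {x \<in> space M. T x \<le> t} = 0" by (simp only: measure_empty)
    with that show False by (simp add: S_def)
  qed
  have bdd: "bdd_below S" using S0 unfolding bdd_below_def by blast
  show "T_max M T \<ge> 0" unfolding T_max_def S_def[symmetric]
    using ne S0 by (intro cInf_greatest) auto
  have "AE x in M. T x \<le> T_max M T + 1 / real (Suc n)" for n
  proof -
    have "T_max M T < T_max M T + 1 / real (Suc n)" by simp
    then obtain t where t: "t \<in> S" "t < T_max M T + 1 / real (Suc n)"
      unfolding T_max_def S_def[symmetric] using ne by (meson cInf_lessD)
    have "AE x in M. x \<in> {x \<in> space M. T x \<le> t}"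
      using t by (intro AE_prob_1) (simp add: S_def)
    then show ?thesis by (rule AE_mp) (use t(2) in auto)
  qed
  then have "AE x in M. \<forall>n. T x \<le> T_max M T + 1 / real (Suc n)"
    by (simp add: AE_all_countable)
  then show "AE x in M. T x \<le> T_max M T"
  proof eventually_elim
    case (elim x)
    show ?case
    proof (rule field_le_epsilon)
      fix e :: real assume "0 < e"
      then obtain n where "1 / real (Suc n) < e"
        using nat_approx_posE by blast
      then show "T x \<le> T_max M T + e" using elim[rule_format, of n] by linarith
    qed
  qed
qed


lemma KM_eq:
  fixes tau :: "'a \<Rightarrow> real"
  assumes P: "prob_space M" and tm[measurable]: "tau \<in> borel_measurable M"
    and nn: "\<forall>x\<in>space M. tau x \<ge> 0" and a: "a \<ge> 0"
  shows "(\<integral>t\<in>{0..a}. S_ARL M tau t \<partial>lborel) = (\<integral>x. min (tau x) a \<partial>M)"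
proof -
  interpret prob_space M by fact
  have mono: "mono (\<lambda>t. - S_ARL M tau t)"
    unfolding mono_def S_ARL_def by (auto intro!: finite_measure_mono)
  have Sm[measurable]: "S_ARL M tau \<in> borel_measurable borel"
    using borel_measurable_uminus[OF borel_measurable_mono[OF mono]] by simp
  have "(\<integral>t\<in>{0..a}. S_ARL M tau t \<partial>lborel) = (\<integral>t. indicator {0..a} t * S_ARL M tau t \<partial>lborel)"
    by (simp add: set_lebesgue_integral_def)
  also have "\<dots> = enn2real (\<integral>\<^sup>+t. ennreal (indicator {0..a} t * S_ARL M tau t) \<partial>lborel)"
    by (rule integral_eq_nn_integral) (auto simp: S_ARL_def)
  also have "\<dots> = enn2real (\<integral>\<^sup>+x. ennreal (min (tau x) a) \<partial>M)"
    by (simp add: layer_cake_min[OF P tm nn a])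
  also have "\<dots> = (\<integral>x. min (tau x) a \<partial>M)"
    using nn a by (intro integral_eq_nn_integral[symmetric]) auto
  finally show ?thesis .
qed

lemma inner_ineq:
  fixes tau :: "'a \<Rightarrow> real"
  assumes P: "prob_space M" and tm[measurable]: "tau \<in> borel_measurable M"
    and nn: "\<forall>x\<in>space M. tau x \<ge> 0" and ti: "integrable M tau"
    and s: "0 \<le> s" "s \<le> a"
    and c: "c = (\<integral>x. min (tau x) a \<partial>M)"
  shows "(\<integral>x. tau x * indicator {y\<in>space M. tau y \<le> s} x \<partial>M)
       \<le> (\<integral>x. c * indicator {y\<in>space M. tau y \<le> s} x \<partial>M)"
proof -
  interpret prob_space M by fact
  define A where "A = {y\<in>space M. tau y \<le> s}"
  have Am[measurable]: "A \<in> sets M" unfolding A_def by measurable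
  define I where "I = (\<integral>x. tau x * indicator A x \<partial>M)"
  define q where "q = prob A"
  have i1: "integrable M (\<lambda>x. tau x * indicator A x)"
    by (rule Bochner_Integration.integrable_bound[OF ti]) (auto simp: indicator_def nn)
  have i2: "integrable M (\<lambda>x. indicator A x :: real)"
    using Am by (intro integrable_real_indicator) (auto simp: emeasure_eq_measure)
  have R: "(\<integral>x. c * indicator A x \<partial>M) = c * q"
    by (simp add: q_def)
  have e1: "(\<integral>x. min (tau x) s \<partial>M) = (\<integral>x. tau x * indicator A x + s * (1 - indicator A x) \<partial>M)"
    by (intro Bochner_Integration.integral_cong) (auto simp: A_def indicator_def)
  also have "\<dots> = I + s * (1 - q)"
    using i1 i2 by (simp add: I_def q_def algebra_simps prob_space)
  finally have e1: "(\<integral>x. min (tau x) s \<partial>M) = I + s * (1 - q)" .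
  have e2: "(\<integral>x. min (tau x) s \<partial>M) \<le> c"
    unfolding c using ti s by (intro integral_mono) auto
  have e3: "I \<le> s * q"
  proof -
    have "I \<le> (\<integral>x. s * indicator A x \<partial>M)"
      unfolding I_def using i1 i2 by (intro integral_mono) (auto simp: A_def indicator_def)
    then show ?thesis by (simp add: q_def)
  qed
  have q: "0 \<le> q" "q \<le> 1" by (auto simp: q_def)
  have "I \<le> c * q"
  proof (cases "c \<le> s")
    case True
    have "c * (1 - q) \<le> s * (1 - q)" using True q by (intro mult_right_mono) auto
    then show ?thesis using e1 e2 by (simp add: algebra_simps)
  next
    case False
    have "s * q \<le> c * q" using False q by (intro mult_right_mono) auto
    then show ?thesis using e3 by linarith
  qed
  then show ?thesis unfolding R[symmetric] I_def A_def .
qed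


theorem theorem4p3:
  fixes M :: "'a measure" and tau T :: "'a \<Rightarrow> real"
  assumes "prob_space M"
    and "tau \<in> borel_measurable M" and "T \<in> borel_measurable M"
    and "\<forall>x\<in>space M. tau x \<ge> 0" and "\<forall>x\<in>space M. T x \<ge> 0"
    and "prob_space.indep_var M borel tau borel T"
    and "integrable M tau"
    and "\<exists>t. measure M {x \<in> space M. T x \<le> t} = 1"
    and "measure M {x \<in> space M. tau x \<le> T x} > 0"
  shows "bias_LB M tau T \<le> bias_KM M tau T \<and> bias_KM M tau T \<le> 0"
proof -
  note P = assms(1) and tm[measurable] = assms(2) and Tm[measurable] = assms(3)
    and tn = assms(4) and Tn = assms(5) and ind = assms(6) and ti = assms(7)
  interpret prob_space M by fact
  define a where "a = T_max M T"
  have a0: "a \<ge> 0" and aeT: "AE x in M. T x \<le> a"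
    using T_max_props[OF P Tm Tn assms(8)] by (auto simp: a_def)
  define c where "c = (\<integral>x. min (tau x) a \<partial>M)"
  have KM: "mu_KM M tau T = c"
    unfolding mu_KM_def a_def[symmetric] c_def by (rule KM_eq[OF P tm tn a0])
  have c0: "c \<ge> 0" unfolding c_def using tn a0 by (intro integral_nonneg_AE) auto
  have cle: "c \<le> mu_inf M tau"
    unfolding c_def mu_inf_def using ti by (intro integral_mono) auto
  define D where "D = {y \<in> space M. tau y \<le> T y}"
  have Dm[measurable]: "D \<in> sets M" unfolding D_def by measurable
  define p where "p = prob D"
  have p0: "p > 0" using assms(9) by (simp add: p_def D_def)
  define Dt where "Dt = distr M borel tau"
  define DT where "DT = distr M borel T"
  have indeq: "Dt \<Otimes>\<^sub>M DT = distr M (borel \<Otimes>\<^sub>M borel) (\<lambda>x. (tau x, T x))"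
    using ind unfolding indep_var_distribution_eq Dt_def DT_def by simp
  interpret Dt: prob_space Dt unfolding Dt_def by (rule prob_space_distr) simp
  interpret DT: prob_space DT unfolding DT_def by (rule prob_space_distr) simp
  interpret pair_sigma_finite Dt DT
    by (simp add: pair_sigma_finite.intro Dt.sigma_finite_measure_axioms DT.sigma_finite_measure_axioms)
  have G: "(\<integral>\<^sup>+x. h (tau x, T x) \<partial>M) = (\<integral>\<^sup>+s. (\<integral>\<^sup>+x. h (tau x, s) \<partial>M) \<partial>DT)"
    if hm: "h \<in> borel_measurable (borel \<Otimes>\<^sub>M borel)" for h :: "real \<times> real \<Rightarrow> ennreal"
  proof -
    have hm': "h \<in> borel_measurable (Dt \<Otimes>\<^sub>M DT)"
      using hm by (simp add: Dt_def DT_def)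
    have "(\<integral>\<^sup>+x. h (tau x, T x) \<partial>M) = (\<integral>\<^sup>+z. h z \<partial>distr M (borel \<Otimes>\<^sub>M borel) (\<lambda>x. (tau x, T x)))"
      using hm by (subst nn_integral_distr) auto
    also have "\<dots> = (\<integral>\<^sup>+z. h z \<partial>(Dt \<Otimes>\<^sub>M DT))" by (simp add: indeq)
    also have "\<dots> = (\<integral>\<^sup>+s. (\<integral>\<^sup>+u. h (u, s) \<partial>Dt) \<partial>DT)"
      by (rule nn_integral_snd[OF hm', symmetric])
    also have "\<dots> = (\<integral>\<^sup>+s. (\<integral>\<^sup>+x. h (tau x, s) \<partial>M) \<partial>DT)"
      using hm unfolding Dt_def
      by (intro nn_integral_cong, subst nn_integral_distr) (auto simp: measurable_Pair2)
    finally show ?thesis .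
  qed
  define h1 where "h1 z = ennreal (fst z * (if fst z \<le> snd z then 1 else 0))" for z :: "real \<times> real"
  define h2 where "h2 z = ennreal (c * (if fst z \<le> snd z then 1 else 0))" for z :: "real \<times> real"
  have h1m: "h1 \<in> borel_measurable (borel \<Otimes>\<^sub>M borel)" unfolding h1_def by measurable
  have h2m: "h2 \<in> borel_measurable (borel \<Otimes>\<^sub>M borel)" unfolding h2_def by measurable
  have aeDT: "AE s in DT. 0 \<le> s \<and> s \<le> a"
    unfolding DT_def using aeT Tn by (subst AE_distr_iff) auto
  have inner: "(\<integral>\<^sup>+x. h1 (tau x, s) \<partial>M) \<le> (\<integral>\<^sup>+x. h2 (tau x, s) \<partial>M)"
    if s: "0 \<le> s" "s \<le> a" for s
  proof -
    define A where "A = {y\<in>space M. tau y \<le> s}"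
    have Am[measurable]: "A \<in> sets M" unfolding A_def by measurable
    have i1: "integrable M (\<lambda>x. tau x * indicator A x)"
      by (rule Bochner_Integration.integrable_bound[OF ti]) (auto simp: indicator_def tn)
    have i2: "integrable M (\<lambda>x. c * indicator A x :: real)"
      using Am by (intro integrable_mult_right integrable_real_indicator) (auto simp: emeasure_eq_measure)
    have "(\<integral>\<^sup>+x. h1 (tau x, s) \<partial>M) = (\<integral>\<^sup>+x. ennreal (tau x * indicator A x) \<partial>M)"
      by (intro nn_integral_cong) (auto simp: h1_def A_def indicator_def)
    also have "\<dots> = ennreal (\<integral>x. tau x * indicator A x \<partial>M)"
      using i1 tn by (intro nn_integral_eq_integral) (auto simp: indicator_def)
    also have "\<dots> \<le> ennreal (\<integral>x. c * indicator A x \<partial>M)"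
      using inner_ineq[OF P tm tn ti s c_def] unfolding A_def by (rule ennreal_leI)
    also have "\<dots> = (\<integral>\<^sup>+x. ennreal (c * indicator A x) \<partial>M)"
      using i2 c0 by (intro nn_integral_eq_integral[symmetric]) (auto simp: indicator_def)
    also have "\<dots> = (\<integral>\<^sup>+x. h2 (tau x, s) \<partial>M)"
      by (intro nn_integral_cong) (auto simp: h2_def A_def indicator_def)
    finally show ?thesis .
  qed
  have "(\<integral>\<^sup>+x. h1 (tau x, T x) \<partial>M) \<le> (\<integral>\<^sup>+x. h2 (tau x, T x) \<partial>M)"
    unfolding G[OF h1m] G[OF h2m]
    by (intro nn_integral_mono_AE) (use aeDT inner in auto)
  moreover have "(\<integral>\<^sup>+x. h1 (tau x, T x) \<partial>M) = (\<integral>\<^sup>+x. ennreal (tau x * indicator D x) \<partial>M)"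
    by (intro nn_integral_cong) (auto simp: h1_def D_def indicator_def)
  moreover have "(\<integral>\<^sup>+x. h2 (tau x, T x) \<partial>M) = (\<integral>\<^sup>+x. ennreal (c * indicator D x) \<partial>M)"
    by (intro nn_integral_cong) (auto simp: h2_def D_def indicator_def)
  moreover have "(\<integral>\<^sup>+x. ennreal (c * indicator D x) \<partial>M) = ennreal (c * p)"
  proof -
    have "(\<integral>\<^sup>+x. ennreal (c * indicator D x) \<partial>M) = (\<integral>\<^sup>+x. ennreal c * indicator D x \<partial>M)"
      by (intro nn_integral_cong) (auto simp: indicator_def)
    also have "\<dots> = ennreal c * emeasure M D" by (simp add: nn_integral_cmult_indicator)
    also have "\<dots> = ennreal (c * p)" using c0 by (simp add: p_def emeasure_eq_measure ennreal_mult)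
    finally show ?thesis .
  qed
  ultimately have le: "(\<integral>\<^sup>+x. ennreal (tau x * indicator D x) \<partial>M) \<le> ennreal (c * p)" by simp
  have num: "(\<integral>x. tau x * indicator D x \<partial>M) \<le> c * p"
  proof -
    have "(\<integral>x. tau x * indicator D x \<partial>M) = enn2real (\<integral>\<^sup>+x. ennreal (tau x * indicator D x) \<partial>M)"
      using tn by (intro integral_eq_nn_integral) (auto simp: indicator_def)
    also have "\<dots> \<le> enn2real (ennreal (c * p))"
      using le by (rule enn2real_mono) simp
    also have "\<dots> = c * p" using c0 p0 by simp
    finally show ?thesis .
  qed
  have LB: "mu_LB M tau T \<le> c"
    unfolding mu_LB_def D_def[symmetric] p_def[symmetric]
    using num p0 by (simp add: divide_le_eq)
  show ?thesis
    unfolding bias_LB_def bias_KM_def KM using LB cle by simp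
qed

end
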